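(* Let $H=(V,E)$, $H_1=(V_1,E_1)$, $H_2=(V_2,E_2)$ be hypergraphs with $V=V_1\cup V_2$ and $E=E_1\cup E_2$. If $V_1\cap V_2\in (L(V_1)\cup E_1)\cap(L(V_2)\cup E_2)$, then \[\mathrm{MC}^H=\overline{\mathrm{MC}}^{H_1}\cap\overline{\mathrm{MC}}^{H_2},\qquad\text{where } \overline{\mathrm{MC}}^{H_k}=\{w\in\mathbb{R}^{\mathcal{J}^H}: \operatorname{proj}_{\mathcal{J}^{H_k}}w\in\mathrm{MC}^{H_k}\},\ k=1,2.\]
   Context: Let $n$ be a positive integer, $[n]=\{1,\dots,n\}$. A hypergraph $H=(V,E)$ here has as vertex set $V$ a family of pairwise disjoint subsets of $[n]$, each of cardinality at least $2$, and hyperedge set $E$ consisting of subsets $e\subseteq V$ with $|e|\ge 2$. Write $L(V)=\{\{I\}: I\in V\}$. For a nonempty $e\subseteq V$, $\mathcal{J}^e$ denotes the family of sets $J\subseteq \bigcup_{I\in e} I$ with $|J\cap I|=1$ for every $I\in e$. Let $\mathcal{J}^H=\bigcup_{e\in L(V)\cup E}\mathcal{J}^e$ (so $\mathcal{J}^{H_k}\subseteq\mathcal{J}^H$). For $w\in\mathbb{R}^{\mathcal{J}^H}$ write $w_i=w_{\{i\}}$ and $w(A)=\sum_{i\in A}w_i$. Let $\mathscr{S}^H=\{w\in\{0,1\}^{\mathcal{J}^H}: w(I)=1\ \forall I\in V;\ w_J=\prod_{i\in J}w_i\ \forall J\in\mathcal{J}^H, |J|>1\}$ and $\mathrm{MC}^H=\operatorname{conv}\mathscr{S}^H$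 (analogously for $H_1,H_2$). $\operatorname{proj}_{S'}$ extracts the coordinates indexed by $S'$. *)

theory Defs
  imports "HOL-Analysis.Analysis" "HOL-Library.Function_Algebras"
begin

(* Real-valued functions on an arbitrary index type form a real vector space
   (pointwise operations); this lets us use the library's convex hull. *)
instantiation "fun" :: (type, real_vector) real_vector
begin
definition scaleR_fun :: "real \<Rightarrow> ('a \<Rightarrow> 'b) \<Rightarrow> 'a \<Rightarrow> 'b" where
  "scaleR_fun r f = (\<lambda>x. r *\<^sub>R f x)"
instance
  by standard (auto simp: scaleR_fun_def fun_eq_iff scaleR_add_right scaleR_add_left)
end

definition hypergraph :: "nat \<Rightarrow> nat set set \<Rightarrow> nat set set set \<Rightarrow> bool" where
  "hypergraph n V E \<longleftrightarrow>
     (\<forall>I\<in>V. I \<subseteq> {1..n} \<and> card I \<ge> 2) \<and>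
     (\<forall>I\<in>V. \<forall>I'\<in>V. I \<noteq> I' \<longrightarrow> I \<inter> I' = {}) \<and>
     (\<forall>e\<in>E. e \<subseteq> V \<and> card e \<ge> 2)"

definition Lv :: "nat set set \<Rightarrow> nat set set set" where
  "Lv V = (\<lambda>I. {I}) ` V"

definition Jfam :: "nat set set \<Rightarrow> nat set set" where
  "Jfam e = {J. J \<subseteq> \<Union>e \<and> (\<forall>I\<in>e. card (J \<inter> I) = 1)}"

definition JH :: "nat set set \<Rightarrow> nat set set set \<Rightarrow> nat set set" where
  "JH V E = \<Union> (Jfam ` (Lv V \<union> E))"

(* R^{J^H}: real functions on nat set vanishing outside J^H *)
definition RJ :: "nat set set \<Rightarrow> (nat set \<Rightarrow> real) set" where
  "RJ S = {w. \<forall>J. J \<notin> S \<longrightarrow> w J = 0}"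

definition SH :: "nat set set \<Rightarrow> nat set set set \<Rightarrow> (nat set \<Rightarrow> real) set" where
  "SH V E = {w \<in> RJ (JH V E).
     (\<forall>J\<in>JH V E. w J \<in> {0,1}) \<and>
     (\<forall>I\<in>V. (\<Sum>i\<in>I. w {i}) = 1) \<and>
     (\<forall>J\<in>JH V E. card J > 1 \<longrightarrow> w J = (\<Prod>i\<in>J. w {i}))}"

definition MC :: "nat set set \<Rightarrow> nat set set set \<Rightarrow> (nat set \<Rightarrow> real) set" where
  "MC V E = convex hull (SH V E)"

definition proj :: "nat set set \<Rightarrow> (nat set \<Rightarrow> real) \<Rightarrow> nat set \<Rightarrow> real" where
  "proj S w = (\<lambda>J. if J \<in> S then w J else 0)"

definition MCbar :: "nat set set \<Rightarrow> nat set set set \<Rightarrow> nat set set \<Rightarrow> nat set set set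
                      \<Rightarrow> (nat set \<Rightarrow> real) set" where
  "MCbar V E Vk Ek = {w \<in> RJ (JH V E). proj (JH Vk Ek) w \<in> MC Vk Ek}"

end

theory Submission
  imports Defs
begin

lemma sum_fun_at: "(sum f A :: 'a \<Rightarrow> real) x = (\<Sum>a\<in>A. f a x)"
  by (induct A rule: infinite_finite_induct) auto

lemma scaleR_fun_at: "((r::real) *\<^sub>R (f :: 'a \<Rightarrow> real)) x = r * f x"
  by (simp add: scaleR_fun_def)

lemma e_sub: "hypergraph n V E \<Longrightarrow> e \<in> Lv V \<union> E \<Longrightarrow> e \<subseteq> V"
  by (auto simp: hypergraph_def Lv_def)

lemma e_ne: "hypergraph n V E \<Longrightarrow> e \<in> Lv V \<union> E \<Longrightarrow> e \<noteq> {}"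
  by (auto simp: hypergraph_def Lv_def)

lemma JH_elem: "K \<in> JH V E \<Longrightarrow> \<exists>e \<in> Lv V \<union> E. K \<in> Jfam e"
  by (auto simp: JH_def)

lemma JH_point:
  assumes "hypergraph n V E" "K \<in> JH V E" "i \<in> K"
  shows "\<exists>I\<in>V. i \<in> I"
proof -
  obtain e where e: "e \<in> Lv V \<union> E" "K \<in> Jfam e" using JH_elem[OF assms(2)] by blast
  then have "K \<subseteq> \<Union>e" by (simp add: Jfam_def)
  then show ?thesis using e_sub[OF assms(1) e(1)] assms(3) by blast
qed

lemma single_JH: "I \<in> V \<Longrightarrow> i \<in> I \<Longrightarrow> {i} \<in> JH V E"
  unfolding JH_def Lv_def Jfam_def
  by (rule UnionI[of "Jfam {I}"]) (auto simp: Jfam_def)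

lemma single_JH': "hypergraph n V E \<Longrightarrow> K \<in> JH V E \<Longrightarrow> i \<in> K \<Longrightarrow> {i} \<in> JH V E"
  using JH_point single_JH by metis

lemma V_finite: "hypergraph n V E \<Longrightarrow> I \<in> V \<Longrightarrow> finite I"
  unfolding hypergraph_def by (meson finite_atLeastAtMost finite_subset)

lemma JH_finite:
  assumes "hypergraph n V E" "K \<in> JH V E" shows "finite K"
proof -
  have "K \<subseteq> {1..n}"
  proof
    fix i assume "i \<in> K"
    then obtain I where I: "I \<in> V" "i \<in> I" using JH_point[OF assms(1,2)] by blast
    have "I \<subseteq> {1..n}" using I(1) assms(1) by (simp add: hypergraph_def)
    then show "i \<in> {1..n}" using I(2) by blast
  qed
  then show ?thesis using finite_subset by blast
qed

lemma JH_ne: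
  assumes "hypergraph n V E" "K \<in> JH V E" shows "K \<noteq> {}"
proof -
  obtain e where e: "e \<in> Lv V \<union> E" "K \<in> Jfam e" using JH_elem[OF assms(2)] by blast
  obtain I where "I \<in> e" using e_ne[OF assms(1) e(1)] by blast
  then have "card (K \<inter> I) = 1" using e(2) by (simp add: Jfam_def)
  then show ?thesis by (metis card.empty inf_bot_left zero_neq_one)
qed

lemma SH_prod:
  assumes "hypergraph n V E" "s \<in> SH V E" "K \<in> JH V E"
  shows "s K = (\<Prod>i\<in>K. s {i})"
proof (cases "card K > 1")
  case True
  have "\<forall>J\<in>JH V E. card J > 1 \<longrightarrow> s J = (\<Prod>i\<in>J. s {i})"
    using assms(2) unfolding SH_def mem_Collect_eq by (elim conjE) assumption
  from this[rule_format, OF assms(3) True] show ?thesis .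
next
  case False
  have "finite K" "K \<noteq> {}" using JH_finite[OF assms(1,3)] JH_ne[OF assms(1,3)] by auto
  then have "card K \<noteq> 0" by simp
  then have "card K = 1" using False by linarith
  then obtain i where Ki: "K = {i}" by (rule card_1_singletonE)
  show ?thesis unfolding Ki by simp
qed

lemma SH_01: "s \<in> SH V E \<Longrightarrow> K \<in> JH V E \<Longrightarrow> s K \<in> {0,1}"
  by (simp add: SH_def)

lemma card_ones:
  assumes "finite I" "\<forall>i\<in>I. f i \<in> {0,1::real}" "sum f I = 1"
  shows "card {i\<in>I. f i = 1} = 1"
proof -
  have "\<And>i. i \<in> I \<Longrightarrow> f i = (if f i = 1 then 1 else 0)"
    using assms(2) by force
  then have "sum f I = (\<Sum>i\<in>I. if f i = 1 then 1 else 0)"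
    by (rule sum.cong[OF refl])
  also have "\<dots> = (\<Sum>i\<in>{i\<in>I. f i = 1}. 1)"
    by (rule sum.inter_filter[symmetric, OF assms(1)])
  also have "\<dots> = real (card {i\<in>I. f i = 1})" by simp
  finally have "real (card {i\<in>I. f i = 1}) = 1" using assms(3) by simp
  then show ?thesis by simp
qed

lemma transversal_eq:
  assumes "J \<in> Jfam e" "K \<in> Jfam e" "J \<subseteq> K"
  shows "J = K"
proof
  show "K \<subseteq> J"
  proof
    fix x assume x: "x \<in> K"
    then obtain I where I: "I \<in> e" "x \<in> I" using assms(2) by (auto simp: Jfam_def)
    have c: "card (J \<inter> I) = 1" "card (K \<inter> I) = 1" using assms I by (auto simp: Jfam_def)
    have "finite (K \<inter> I)" using c(2) by (intro card_ge_0_finite) simp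
    moreover have "J \<inter> I \<subseteq> K \<inter> I" using assms(3) by blast
    ultimately have "J \<inter> I = K \<inter> I" using c by (intro card_subset_eq) simp_all
    then show "x \<in> J" using x I by blast
  qed
qed (use assms in auto)

definition key :: "nat set set \<Rightarrow> (nat set \<Rightarrow> real) \<Rightarrow> nat set" where
  "key e0 s = {i \<in> \<Union>e0. s {i} = 1}"

lemma key_lemma:
  assumes hg: "hypergraph n V E" and e0: "e0 \<in> Lv V \<union> E" and s: "s \<in> SH V E"
  shows "key e0 s \<in> Jfam e0"
    and "\<And>J. J \<in> Jfam e0 \<Longrightarrow> s J = (if J = key e0 s then 1 else 0)"
proof -
  have e0V: "e0 \<subseteq> V" using e_sub[OF hg e0] .
  have s01: "s {i} \<in> {0,1}" if "I \<in> V" "i \<in> I" for I i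
    using SH_01[OF s single_JH[OF that]] .
  show ks: "key e0 s \<in> Jfam e0"
    unfolding Jfam_def
  proof (intro CollectI conjI ballI)
    show "key e0 s \<subseteq> \<Union> e0" by (auto simp: key_def)
    fix I assume I: "I \<in> e0"
    have "key e0 s \<inter> I = {i\<in>I. s {i} = 1}" using I by (auto simp: key_def)
    moreover have "card {i\<in>I. s {i} = 1} = 1"
      using I e0V s s01 V_finite[OF hg]
      by (intro card_ones) (auto simp: SH_def)
    ultimately show "card (key e0 s \<inter> I) = 1" by simp
  qed
  fix J assume J: "J \<in> Jfam e0"
  have JJH: "J \<in> JH V E" using J e0 by (auto simp: JH_def)
  have sJ: "s J = (\<Prod>i\<in>J. s {i})" using SH_prod[OF hg s JJH] .
  have Jsub: "J \<subseteq> \<Union>e0" using J by (simp add: Jfam_def)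
  have J01: "\<forall>i\<in>J. s {i} \<in> {0,1}" using Jsub e0V s01 by blast
  show "s J = (if J = key e0 s then 1 else 0)"
  proof (cases "\<forall>i\<in>J. s {i} = 1")
    case True
    then have "J \<subseteq> key e0 s" using Jsub by (auto simp: key_def)
    then have "J = key e0 s" using transversal_eq[OF J ks] by blast
    then show ?thesis using sJ True by simp
  next
    case False
    then obtain i where i: "i \<in> J" "s {i} = 0" using J01 by blast
    have "finite J" using JH_finite[OF hg JJH] .
    then have "s J = 0" using sJ i by (metis prod_zero_iff)
    moreover have "J \<noteq> key e0 s" using i False by (auto simp: key_def)
    ultimately show ?thesis by simp
  qed
qed

lemma overlap:
  assumes hg: "hypergraph n V E" and hg1: "hypergraph n V1 E1" and hg2: "hypergraph n V2 E2"
    and VV: "V = V1 \<union> V2" and K1: "K \<in> JH V1 E1" and K2: "K \<in> JH V2 E2"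
  shows "K \<subseteq> \<Union>(V1 \<inter> V2)"
proof
  fix x assume x: "x \<in> K"
  obtain I1 where I1: "I1 \<in> V1" "x \<in> I1" using JH_point[OF hg1 K1 x] by blast
  obtain I2 where I2: "I2 \<in> V2" "x \<in> I2" using JH_point[OF hg2 K2 x] by blast
  have disj: "\<forall>I\<in>V. \<forall>I'\<in>V. I \<noteq> I' \<longrightarrow> I \<inter> I' = {}"
    using hg by (simp add: hypergraph_def)
  have "I1 \<in> V" "I2 \<in> V" using I1 I2 VV by auto
  then have "I1 = I2" using disj I1(2) I2(2) by blast
  then show "x \<in> \<Union>(V1 \<inter> V2)" using I1 I2 by blast
qed

lemma proj_SH:
  assumes hgk: "hypergraph n Vk Ek" and sub: "JH Vk Ek \<subseteq> JH V E" and VS: "Vk \<subseteq> V"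
    and s: "s \<in> SH V E"
  shows "proj (JH Vk Ek) s \<in> SH Vk Ek"
  unfolding SH_def
proof (intro CollectI conjI ballI impI)
  show "proj (JH Vk Ek) s \<in> RJ (JH Vk Ek)" by (simp add: RJ_def proj_def)
  fix J assume J: "J \<in> JH Vk Ek"
  then show "proj (JH Vk Ek) s J \<in> {0, 1}" using sub s by (auto simp: SH_def proj_def)
  assume "1 < card J"
  then have "s J = (\<Prod>i\<in>J. s {i})" using J sub s by (auto simp: SH_def)
  moreover have "\<forall>i\<in>J. {i} \<in> JH Vk Ek" using single_JH'[OF hgk J] by blast
  ultimately show "proj (JH Vk Ek) s J = (\<Prod>i\<in>J. proj (JH Vk Ek) s {i})"
    using J by (simp add: proj_def)
next
  fix I assume I: "I \<in> Vk"
  then have "(\<Sum>i\<in>I. s {i}) = 1" using VS s by (auto simp: SH_def)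
  moreover have "\<forall>i\<in>I. {i} \<in> JH Vk Ek" using single_JH I by metis
  ultimately show "(\<Sum>i\<in>I. proj (JH Vk Ek) s {i}) = 1" by (simp add: proj_def)
qed

lemma linear_proj: "linear (proj S)"
  by (rule linearI) (auto simp: proj_def fun_eq_iff scaleR_fun_def)

lemma RJ_convex: "convex (RJ S)"
  unfolding convex_def RJ_def by (auto simp: scaleR_fun_def)

lemma MC_sub:
  assumes hgk: "hypergraph n Vk Ek" and sub: "JH Vk Ek \<subseteq> JH V E" and VS: "Vk \<subseteq> V"
  shows "MC V E \<subseteq> MCbar V E Vk Ek"
proof
  fix w assume w: "w \<in> MC V E"
  have "SH V E \<subseteq> RJ (JH V E)" by (auto simp: SH_def)
  then have "w \<in> RJ (JH V E)" using w unfolding MC_def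
    by (meson RJ_convex hull_minimal subsetD)
  moreover have "proj (JH Vk Ek) w \<in> proj (JH Vk Ek) ` (convex hull SH V E)"
    using w by (simp add: MC_def)
  then have "proj (JH Vk Ek) w \<in> convex hull (proj (JH Vk Ek) ` SH V E)"
    by (simp add: convex_hull_linear_image[OF linear_proj])
  moreover have "proj (JH Vk Ek) ` SH V E \<subseteq> SH Vk Ek"
    using proj_SH[OF hgk sub VS] by blast
  ultimately show "w \<in> MCbar V E Vk Ek"
    by (auto simp: MCbar_def MC_def dest: hull_mono[THEN subsetD, rotated])
qed

lemma SH_sum: "s \<in> SH V E \<Longrightarrow> I \<in> V \<Longrightarrow> (\<Sum>i\<in>I. s {i}) = 1"
  unfolding SH_def by blast

lemma SH_RJ: "s \<in> SH V E \<Longrightarrow> K \<notin> JH V E \<Longrightarrow> s K = 0"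
  unfolding SH_def RJ_def by blast

lemma le_key:
  assumes "finite A" "s \<in> A" "\<forall>x\<in>A. 0 \<le> la x"
  shows "la s \<le> (\<Sum>s'\<in>A. if k s' = k s then la s' else (0::real))"
proof -
  have "(\<lambda>s'. if k s' = k s then la s' else (0::real)) s \<le> (\<Sum>s'\<in>A. if k s' = k s then la s' else 0)"
    by (rule member_le_sum) (use assms in auto)
  then show ?thesis by simp
qed

lemma cancel_aux:
  assumes "0 \<le> l" "l \<le> (a::real)"
  shows "l * p * inverse a * a = l * p"
proof (cases "a = 0")
  case True then have "l = 0" using assms by simp
  then show ?thesis by simp
next
  case False then show ?thesis by simp
qed

theorem theorem4p2:
  fixes n :: nat and V V1 V2 :: "nat set set" and E E1 E2 :: "nat set set set"
  assumes "hypergraph n V E" and "hypergraph n V1 E1" and "hypergraph n V2 E2"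
    and "V = V1 \<union> V2" and "E = E1 \<union> E2"
    and "V1 \<inter> V2 \<in> (Lv V1 \<union> E1) \<inter> (Lv V2 \<union> E2)"
  shows "MC V E = MCbar V E V1 E1 \<inter> MCbar V E V2 E2"
proof -
  note hg = assms(1) and hg1 = assms(2) and hg2 = assms(3)
  define J1 where "J1 = JH V1 E1"
  define J2 where "J2 = JH V2 E2"
  define e0 where "e0 = V1 \<inter> V2"
  have JJ: "JH V E = J1 \<union> J2" unfolding J1_def J2_def JH_def Lv_def using assms(4,5) by auto
  have e01: "e0 \<in> Lv V1 \<union> E1" and e02: "e0 \<in> Lv V2 \<union> E2" using assms(6) e0_def by auto
  have sub1: "JH V1 E1 \<subseteq> JH V E" and sub2: "JH V2 E2 \<subseteq> JH V E" using JJ J1_def J2_def by auto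
  have VS1: "V1 \<subseteq> V" and VS2: "V2 \<subseteq> V" using assms(4) by auto
  show ?thesis
  proof
    show "MC V E \<subseteq> MCbar V E V1 E1 \<inter> MCbar V E V2 E2"
      using MC_sub[OF hg1 sub1 VS1] MC_sub[OF hg2 sub2 VS2] by blast
  next
    show "MCbar V E V1 E1 \<inter> MCbar V E V2 E2 \<subseteq> MC V E"
    proof
      fix w assume w: "w \<in> MCbar V E V1 E1 \<inter> MCbar V E V2 E2"
      have wRJ: "w \<in> RJ (JH V E)" using w by (simp add: MCbar_def)
      have w1: "proj J1 w \<in> convex hull SH V1 E1" using w by (simp add: MCbar_def MC_def J1_def)
      have w2: "proj J2 w \<in> convex hull SH V2 E2" using w by (simp add: MCbar_def MC_def J2_def)
      obtain A la where A: "finite A" "A \<subseteq> SH V1 E1" "\<forall>x\<in>A. 0 \<le> la x" "sum la A = 1"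
        "(\<Sum>v\<in>A. la v *\<^sub>R v) = proj J1 w"
        using w1 unfolding convex_hull_explicit by blast
      obtain B mu where B: "finite B" "B \<subseteq> SH V2 E2" "\<forall>x\<in>B. 0 \<le> mu x" "sum mu B = 1"
        "(\<Sum>v\<in>B. mu v *\<^sub>R v) = proj J2 w"
        using w2 unfolding convex_hull_explicit by blast
      define k where "k = key e0"
      have wA: "w K = (\<Sum>s\<in>A. la s * s K)" if "K \<in> J1" for K
      proof -
        have "w K = proj J1 w K" using that by (simp add: proj_def)
        also have "\<dots> = (\<Sum>s\<in>A. la s * s K)" unfolding A(5)[symmetric] sum_fun_at scaleR_fun_at ..
        finally show ?thesis .
      qed
      have wB: "w K = (\<Sum>t\<in>B. mu t * t K)" if "K \<in> J2" for K
      proof -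
        have "w K = proj J2 w K" using that by (simp add: proj_def)
        also have "\<dots> = (\<Sum>t\<in>B. mu t * t K)" unfolding B(5)[symmetric] sum_fun_at scaleR_fun_at ..
        finally show ?thesis .
      qed
      have kA: "k s \<in> Jfam e0" if "s \<in> A" for s
        using key_lemma(1)[OF hg1 e01] that A(2) k_def by blast
      have kA': "s J = (if J = k s then 1 else 0)" if "s \<in> A" "J \<in> Jfam e0" for s J
        using key_lemma(2)[OF hg1 e01, of s J] that A(2) k_def by blast
      have kB: "k t \<in> Jfam e0" if "t \<in> B" for t
        using key_lemma(1)[OF hg2 e02] that B(2) k_def by blast
      have kB': "t J = (if J = k t then 1 else 0)" if "t \<in> B" "J \<in> Jfam e0" for t J
        using key_lemma(2)[OF hg2 e02, of t J] that B(2) k_def by blast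
      have F1: "Jfam e0 \<subseteq> J1" using e01 unfolding J1_def JH_def by blast
      have F2: "Jfam e0 \<subseteq> J2" using e02 unfolding J2_def JH_def by blast
      have wFA: "w J = (\<Sum>s\<in>A. if k s = J then la s else 0)" if "J \<in> Jfam e0" for J
      proof -
        have "w J = (\<Sum>s\<in>A. la s * s J)" using wA F1 that by blast
        also have "\<dots> = (\<Sum>s\<in>A. if k s = J then la s else 0)"
          by (rule sum.cong[OF refl]) (simp add: kA'[OF _ that] eq_commute)
        finally show ?thesis .
      qed
      have wFB: "w J = (\<Sum>t\<in>B. if k t = J then mu t else 0)" if "J \<in> Jfam e0" for J
      proof -
        have "w J = (\<Sum>t\<in>B. mu t * t J)" using wB F2 that by blast
        also have "\<dots> = (\<Sum>t\<in>B. if k t = J then mu t else 0)"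
          by (rule sum.cong[OF refl]) (simp add: kB'[OF _ that] eq_commute)
        finally show ?thesis .
      qed
      have law: "la s \<le> w (k s)" if "s \<in> A" for s
        using le_key[OF A(1) that A(3), of k] wFA[OF kA[OF that]] by simp
      have muw: "mu t \<le> w (k t)" if "t \<in> B" for t
        using le_key[OF B(1) that B(3), of k] wFB[OF kB[OF that]] by simp
      define P where "P = {x \<in> A \<times> B. k (fst x) = k (snd x)}"
      define c where "c = (\<lambda>x. la (fst x) * mu (snd x) * inverse (w (k (fst x))))"
      define g where "g = (\<lambda>x::(nat set \<Rightarrow> real) \<times> (nat set \<Rightarrow> real). \<lambda>K. if K \<in> J1 then fst x K else snd x K)"
      have finAB: "finite (A \<times> B)" using A(1) B(1) by simp
      have finP: "finite P" unfolding P_def using finAB by simp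
      have c_nn: "0 \<le> c x" if "x \<in> P" for x
      proof -
        have "fst x \<in> A" "snd x \<in> B" using that P_def by auto
        then show ?thesis unfolding c_def using A(3) B(3) law[of "fst x"]
          by (intro mult_nonneg_nonneg) auto
      qed
      have cross: "(\<Sum>x\<in>P. G x) = (\<Sum>s\<in>A. \<Sum>t\<in>B. if k s = k t then G (s, t) else 0)" for G
      proof -
        have "(\<Sum>x\<in>P. G x) = (\<Sum>x\<in>A \<times> B. if k (fst x) = k (snd x) then G x else 0)"
          unfolding P_def by (rule sum.inter_filter[OF finAB])
        also have "\<dots> = (\<Sum>x\<in>A \<times> B. case x of (s, t) \<Rightarrow> if k s = k t then G (s, t) else 0)"
          by (rule sum.cong[OF refl]) (auto split: prod.splits)
        also have "\<dots> = (\<Sum>s\<in>A. \<Sum>t\<in>B. if k s = k t then G (s, t) else 0)"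
          by (rule sum.cartesian_product[symmetric])
        finally show ?thesis .
      qed
      have S1: "(\<Sum>x\<in>P. c x * \<phi> (fst x)) = (\<Sum>s\<in>A. la s * \<phi> s)" for \<phi> :: "(nat set \<Rightarrow> real) \<Rightarrow> real"
      proof -
        have "(\<Sum>x\<in>P. c x * \<phi> (fst x)) =
           (\<Sum>s\<in>A. \<Sum>t\<in>B. if k s = k t then la s * mu t * inverse (w (k s)) * \<phi> s else 0)"
          unfolding cross c_def fst_conv snd_conv ..
        also have "\<dots> = (\<Sum>s\<in>A. la s * \<phi> s)"
        proof (rule sum.cong[OF refl])
          fix s assume s: "s \<in> A"
          have "(\<Sum>t\<in>B. if k s = k t then la s * mu t * inverse (w (k s)) * \<phi> s else 0)
              = (\<Sum>t\<in>B. (la s * \<phi> s * inverse (w (k s))) * (if k t = k s then mu t else 0))"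
            by (rule sum.cong[OF refl]) (auto simp: mult_ac)
          also have "\<dots> = la s * \<phi> s * inverse (w (k s)) * w (k s)"
            unfolding sum_distrib_left[symmetric] wFB[OF kA[OF s]] ..
          also have "\<dots> = la s * \<phi> s"
            using cancel_aux[of "la s" "w (k s)" "\<phi> s"] A(3) s law[OF s] by simp
          finally show "(\<Sum>t\<in>B. if k s = k t then la s * mu t * inverse (w (k s)) * \<phi> s else 0) = la s * \<phi> s" .
        qed
        finally show ?thesis .
      qed
      have S2: "(\<Sum>x\<in>P. c x * \<psi> (snd x)) = (\<Sum>t\<in>B. mu t * \<psi> t)" for \<psi> :: "(nat set \<Rightarrow> real) \<Rightarrow> real"
      proof -
        have "(\<Sum>x\<in>P. c x * \<psi> (snd x)) =
           (\<Sum>s\<in>A. \<Sum>t\<in>B. if k s = k t then la s * mu t * inverse (w (k s)) * \<psi> t else 0)"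
          unfolding cross c_def fst_conv snd_conv ..
        also have "\<dots> = (\<Sum>t\<in>B. \<Sum>s\<in>A. if k s = k t then la s * mu t * inverse (w (k s)) * \<psi> t else 0)"
          by (rule sum.swap)
        also have "\<dots> = (\<Sum>t\<in>B. mu t * \<psi> t)"
        proof (rule sum.cong[OF refl])
          fix t assume t: "t \<in> B"
          have "(\<Sum>s\<in>A. if k s = k t then la s * mu t * inverse (w (k s)) * \<psi> t else 0)
              = (\<Sum>s\<in>A. (mu t * \<psi> t * inverse (w (k t))) * (if k s = k t then la s else 0))"
            by (rule sum.cong[OF refl]) (auto simp: mult_ac)
          also have "\<dots> = mu t * \<psi> t * inverse (w (k t)) * w (k t)"
            unfolding sum_distrib_left[symmetric] wFA[OF kB[OF t]] ..
          also have "\<dots> = mu t * \<psi> t"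
            using cancel_aux[of "mu t" "w (k t)" "\<psi> t"] B(3) t muw[OF t] by simp
          finally show "(\<Sum>s\<in>A. if k s = k t then la s * mu t * inverse (w (k s)) * \<psi> t else 0) = mu t * \<psi> t" .
        qed
        finally show ?thesis .
      qed
      have sumc: "sum c P = 1"
        using S1[of "\<lambda>_. 1"] A(4) by simp
      have wsum: "w = (\<Sum>x\<in>P. c x *\<^sub>R g x)"
      proof
        fix K
        show "w K = (\<Sum>x\<in>P. c x *\<^sub>R g x) K"
        proof (cases "K \<in> J1")
          case True
          have "(\<Sum>x\<in>P. c x *\<^sub>R g x) K = (\<Sum>x\<in>P. c x * fst x K)"
            unfolding sum_fun_at scaleR_fun_at g_def using True by simp
          also have "\<dots> = (\<Sum>s\<in>A. la s * s K)" by (rule S1)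
          finally show ?thesis using wA[OF True] by simp
        next
          case False
          have "(\<Sum>x\<in>P. c x *\<^sub>R g x) K = (\<Sum>x\<in>P. c x * snd x K)"
            unfolding sum_fun_at scaleR_fun_at g_def using False by simp
          also have "\<dots> = (\<Sum>t\<in>B. mu t * t K)" by (rule S2)
          finally have eq: "(\<Sum>x\<in>P. c x *\<^sub>R g x) K = (\<Sum>t\<in>B. mu t * t K)" .
          show ?thesis
          proof (cases "K \<in> J2")
            case True then show ?thesis using wB eq by simp
          next
            case False2: False
            have "K \<notin> JH V E" using False False2 JJ by blast
            then have "w K = 0" using wRJ by (simp add: RJ_def)
            moreover have "t K = 0" if "t \<in> B" for t
              using SH_RJ[of t V2 E2 K] that B(2) False2 J2_def by blast
            then have "(\<Sum>t\<in>B. mu t * t K) = 0" by (intro sum.neutral) simp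
            ultimately show ?thesis using eq by simp
          qed
        qed
      qed
      have gS: "g x \<in> SH V E" if x: "x \<in> P" for x
      proof -
        define s where "s = fst x"
        define t where "t = snd x"
        have s: "s \<in> SH V1 E1" and t: "t \<in> SH V2 E2" and kst: "k s = k t"
          using x A(2) B(2) unfolding P_def s_def t_def by auto
        have agree: "s {i} = t {i}" if i: "i \<in> \<Union>e0" for i
        proof -
          obtain I where I: "I \<in> e0" "i \<in> I" using i by blast
          have "I \<in> V1" "I \<in> V2" using I e0_def by auto
          then have "s {i} \<in> {0,1}" "t {i} \<in> {0,1}"
            using SH_01[OF s single_JH] SH_01[OF t single_JH] I(2) by blast+
          moreover have "s {i} = 1 \<longleftrightarrow> t {i} = 1"
            using kst i unfolding k_def key_def by blast
          ultimately show ?thesis by auto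
        qed
        have over: "s K = t K" if "K \<in> J1" "K \<in> J2" for K
        proof -
          have Ksub: "K \<subseteq> \<Union>e0" using overlap[OF hg hg1 hg2 assms(4)] that J1_def J2_def e0_def by blast
          have "s K = (\<Prod>i\<in>K. s {i})" using SH_prod[OF hg1 s] that J1_def by blast
          also have "\<dots> = (\<Prod>i\<in>K. t {i})" using agree Ksub by (intro prod.cong) blast+
          also have "\<dots> = t K" using SH_prod[OF hg2 t] that J2_def by metis
          finally show ?thesis .
        qed
        have g1: "g x K = s K" if "K \<in> J1" for K using that unfolding g_def s_def by simp
        have g2: "g x K = t K" if "K \<in> J2" for K
          using that over unfolding g_def s_def t_def by auto
        have r1: "\<forall>K. K \<notin> JH V E \<longrightarrow> g x K = 0"
        proof (intro allI impI)
          fix K assume K: "K \<notin> JH V E"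
          then have "K \<notin> J1" "K \<notin> J2" using JJ by auto
          then show "g x K = 0" using SH_RJ[OF t] J2_def unfolding g_def t_def by auto
        qed
        have r2: "\<forall>K\<in>JH V E. g x K \<in> {0,1}"
        proof
          fix K assume "K \<in> JH V E"
          then consider "K \<in> J1" | "K \<in> J2" using JJ by auto
          then show "g x K \<in> {0,1}"
          proof cases
            case 1 then show ?thesis using g1 SH_01[OF s] J1_def by metis
          next
            case 2 then show ?thesis using g2 SH_01[OF t] J2_def by metis
          qed
        qed
        have r3: "\<forall>I\<in>V. (\<Sum>i\<in>I. g x {i}) = 1"
        proof
          fix I assume "I \<in> V"
          then consider "I \<in> V1" | "I \<in> V2" using assms(4) by auto
          then show "(\<Sum>i\<in>I. g x {i}) = 1"
          proof cases
            case 1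
            have "(\<Sum>i\<in>I. g x {i}) = (\<Sum>i\<in>I. s {i})"
              using g1 single_JH[OF 1] J1_def by (intro sum.cong) auto
            then show ?thesis using SH_sum[OF s 1] by simp
          next
            case 2
            have "(\<Sum>i\<in>I. g x {i}) = (\<Sum>i\<in>I. t {i})"
              using g2 single_JH[OF 2] J2_def by (intro sum.cong) auto
            then show ?thesis using SH_sum[OF t 2] by simp
          qed
        qed
        have r4: "\<forall>K\<in>JH V E. card K > 1 \<longrightarrow> g x K = (\<Prod>i\<in>K. g x {i})"
        proof (intro ballI impI)
          fix K assume "K \<in> JH V E" "card K > 1"
          then consider "K \<in> J1" | "K \<in> J2" using JJ by auto
          then show "g x K = (\<Prod>i\<in>K. g x {i})"
          proof cases
            case 1
            have "g x K = s K" using g1[OF 1] .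
            also have "\<dots> = (\<Prod>i\<in>K. s {i})" using SH_prod[OF hg1 s] 1 J1_def by blast
            also have "\<dots> = (\<Prod>i\<in>K. g x {i})"
              using g1 single_JH'[OF hg1] 1 J1_def by (intro prod.cong) auto
            finally show ?thesis .
          next
            case 2
            have "g x K = t K" using g2[OF 2] .
            also have "\<dots> = (\<Prod>i\<in>K. t {i})" using SH_prod[OF hg2 t] 2 J2_def by blast
            also have "\<dots> = (\<Prod>i\<in>K. g x {i})"
              using g2 single_JH'[OF hg2] 2 J2_def by (intro prod.cong) auto
            finally show ?thesis .
          qed
        qed
        show ?thesis unfolding SH_def RJ_def mem_Collect_eq
          using r1 r2 r3 r4 by blast
      qed
      show "w \<in> MC V E"
        unfolding MC_def wsum
        by (rule convex_sum[OF finP convex_convex_hull sumc])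
           (simp_all add: c_nn gS hull_inc)
    qed
  qed
qed

end
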